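(* Let $P$ be a set partition of $[n]$ with $3\le |P|\le n-1$, and let $Q\le P$ be a set partition with $|Q|\ge 3$. Then there is a set partition $Q'$ with $Q'\preceq P$ and $Q\le Q'$, and moreover $Z_Q(H)\subset Z_{Q'}(H)$ for every $H\in S(n)$.
   Context: $[n]=\{1,\dots,n\}$. A stable $n$-labeled tree is a finite tree with exactly $n$ leaves labeled bijectively by $[n]$, all of whose internal vertices have degree $\ge 3$; $V(G)$ is the set of internal vertices, $S(n)$ the set of such trees up to label-preserving isomorphism, $S_k(n)$ those with exactly $k$ internal vertices. $G\rightsquigarrow G'$ means $G'$ is obtained from $G$ by collapsing connected sets of internal vertices to single vertices, inducing a surjection $V(G)\to V(G')$; write $w\rightsquigarrow v$ if $w$ maps to $v$. Set partitions: for set partitions $P,Q$ of $[n]$, $P\le Q$ means $Q$ refines $P$ (every block of $Q$ is contained in a block of $P$). $P\preceq Q$ means $P\le Q$ and no block $B\in P$ with $|B|\ge 2$ is contained in the union of the singleton blocks of $Q$. Basic pairs: for a set partition $P$ with $3\le |P|\le n-1$, the basic pair $(G_P,v_P)$ is the tree in $S(n)$ with a central internal vertex $v_P$ such that for each block $B\in P$ with $|B|=1$ the leaf labeled by it is adjacent to $v_P$, and for each block $B$ with $|B|\ge2$ there is an internal vertex adjacent to $v_P$ and to the leaves labeled by $B$ (and to nothing else). For such $P$ define the assignment $Z_P$ by $Z_P(H)=\{w\in V(H): \text{there is a contraction } H\rightsquigarrow G_P \text{ with } w\rightsquigarrow v_P\}$. *)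

theory Defs
  imports Main "HOL-Library.Disjoint_Sets"
begin

text \<open>A stable n-labeled tree (for n at least 3, where every leaf is adjacent to exactly
one internal vertex). It is represented by its finite set of internal vertices, the
symmetric edge relation among internal vertices, and the map att sending each leaf
label i in [n] to the internal vertex it is adjacent to.\<close>

record 'v ltree =
  verts :: "'v set"
  edges :: "('v \<times> 'v) set"
  att   :: "nat \<Rightarrow> 'v"

definition stable_tree :: "nat \<Rightarrow> 'v ltree \<Rightarrow> bool" where
  "stable_tree n T \<longleftrightarrow>
     finite (verts T) \<and> verts T \<noteq> {} \<and>
     edges T \<subseteq> verts T \<times> verts T \<and> sym (edges T) \<and> irrefl (edges T) \<and>
     (\<forall>x\<in>verts T. \<forall>y\<in>verts T. (x, y) \<in> (edges T)\<^sup>*) \<and>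
     card (edges T) = 2 * (card (verts T) - 1) \<and>
     (\<forall>i\<in>{1..n}. att T i \<in> verts T) \<and>
     (\<forall>v\<in>verts T. card {u. (v, u) \<in> edges T} + card {i\<in>{1..n}. att T i = v} \<ge> 3)"

text \<open>contracts n H G f: G is obtained from H by collapsing the connected sets of internal
vertices given by the fibres of f, and f is the induced surjection V(H) to V(G).\<close>

definition contracts :: "nat \<Rightarrow> 'v ltree \<Rightarrow> 'w ltree \<Rightarrow> ('v \<Rightarrow> 'w) \<Rightarrow> bool" where
  "contracts n H G f \<longleftrightarrow>
     f ` verts H = verts G \<and>
     (\<forall>y\<in>verts G. \<forall>x\<in>verts H. \<forall>x'\<in>verts H. f x = y \<longrightarrow> f x' = y \<longrightarrow>
        (x, x') \<in> (edges H \<inter> {z\<in>verts H. f z = y} \<times> {z\<in>verts H. f z = y})\<^sup>*) \<and>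
     (\<forall>y\<in>verts G. \<forall>y'\<in>verts G. y \<noteq> y' \<longrightarrow>
        ((y, y') \<in> edges G \<longleftrightarrow> (\<exists>x x'. (x, x') \<in> edges H \<and> f x = y \<and> f x' = y'))) \<and>
     (\<forall>i\<in>{1..n}. att G i = f (att H i))"

text \<open>Set partitions of [n]; P \<le> Q means Q refines P.\<close>

definition part_le :: "nat set set \<Rightarrow> nat set set \<Rightarrow> bool" where
  "part_le P Q \<longleftrightarrow> (\<forall>B\<in>Q. \<exists>C\<in>P. B \<subseteq> C)"

definition part_preceq :: "nat set set \<Rightarrow> nat set set \<Rightarrow> bool" where
  "part_preceq P Q \<longleftrightarrow> part_le P Q \<and>
     (\<forall>B\<in>P. card B \<ge> 2 \<longrightarrow> \<not> B \<subseteq> \<Union>{C\<in>Q. card C = 1})"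

text \<open>The basic pair (G_P, v_P): internal vertices are None (= v_P) and Some B for each
block B of P with at least two elements.\<close>

definition block_of :: "nat set set \<Rightarrow> nat \<Rightarrow> nat set" where
  "block_of P i = (THE B. B \<in> P \<and> i \<in> B)"

definition basic_tree :: "nat set set \<Rightarrow> nat set option ltree" where
  "basic_tree P =
     \<lparr> verts = insert None (Some ` {B\<in>P. card B \<ge> 2}),
       edges = {(None, Some B) | B. B \<in> P \<and> card B \<ge> 2}
             \<union> {(Some B, None) | B. B \<in> P \<and> card B \<ge> 2},
       att = (\<lambda>i. if card (block_of P i) \<ge> 2 then Some (block_of P i) else None) \<rparr>"

definition basic_vertex :: "nat set option" where
  "basic_vertex = None"

definition Z :: "nat \<Rightarrow> nat set set \<Rightarrow> 'v ltree \<Rightarrow> 'v set" where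
  "Z n P H = {w \<in> verts H. \<exists>f. contracts n H (basic_tree P) f \<and> f w = basic_vertex}"

end

theory Submission
  imports Defs
begin

lemma block_of_eq:
  assumes "partition_on A P" "B \<in> P" "i \<in> B"
  shows "block_of P i = B"
  unfolding block_of_def
proof (rule the_equality)
  show "B \<in> P \<and> i \<in> B" using assms by auto
  fix C assume "C \<in> P \<and> i \<in> C"
  then show "C = B" using assms unfolding partition_on_def disjoint_def
    by blast
qed

definition splitp :: "nat set set \<Rightarrow> nat set set \<Rightarrow> nat set set" where
  "splitp Q X = (Q - X) \<union> (\<lambda>i. {i}) ` \<Union>X"

lemma splitp_part:
  assumes "partition_on A Q" "X \<subseteq> Q" "\<forall>B\<in>X. 2 \<le> card B"
  shows "partition_on A (splitp Q X)"
proof -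
  have d: "\<And>a b. a \<in> Q \<Longrightarrow> b \<in> Q \<Longrightarrow> a \<noteq> b \<Longrightarrow> a \<inter> b = {}"
    using assms(1) unfolding partition_on_def disjoint_def by blast
  have ne: "{} \<notin> Q" "\<Union>Q = A" using assms(1) by (auto simp: partition_on_def)
  show ?thesis unfolding partition_on_def splitp_def disjoint_def
  proof (intro conjI)
    show "\<Union>(Q - X \<union> (\<lambda>i. {i}) ` \<Union>X) = A" using ne assms(2) by auto
    show "{} \<notin> Q - X \<union> (\<lambda>i. {i}) ` \<Union>X" using ne by auto
    show "\<forall>a\<in>Q - X \<union> (\<lambda>i. {i}) ` \<Union>X. \<forall>b\<in>Q - X \<union> (\<lambda>i. {i}) ` \<Union>X. a \<noteq> b \<longrightarrow> a \<inter> b = {}"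
      using d assms(2) by (auto; blast)
  qed
qed

lemma contr_split:
  assumes pQ: "partition_on {1..n} Q" and XQ: "X \<subseteq> Q" and Xc: "\<forall>B\<in>X. 2 \<le> card B"
    and st: "stable_tree n H" and c: "contracts n H (basic_tree Q) f"
    and gdef: "g = (\<lambda>x. case f x of None \<Rightarrow> None | Some B \<Rightarrow> if B \<in> X then None else Some B)"
  shows "contracts n H (basic_tree (splitp Q X)) g"
proof -
  let ?G = "basic_tree Q" let ?Q' = "splitp Q X" let ?G' = "basic_tree ?Q'"
  have gN: "\<And>x. g x = None \<longleftrightarrow> f x = None \<or> (\<exists>B\<in>X. f x = Some B)"
    unfolding gdef by (auto split: option.splits)
  have gS: "\<And>x B. g x = Some B \<longleftrightarrow> f x = Some B \<and> B \<notin> X"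
    unfolding gdef by (auto split: option.splits)
  have gd: "\<And>B. (B \<in> ?Q' \<and> 2 \<le> card B) \<longleftrightarrow> (B \<in> Q \<and> B \<notin> X \<and> 2 \<le> card B)"
    unfolding splitp_def using XQ by auto
  have vG: "verts ?G = insert None (Some ` {B\<in>Q. 2 \<le> card B})" by (simp add: basic_tree_def)
  have vG': "verts ?G' = insert None (Some ` {B\<in>Q. B \<notin> X \<and> 2 \<le> card B})"
    using gd by (auto simp: basic_tree_def)
  have eG: "edges ?G = {(None, Some B) | B. B \<in> Q \<and> 2 \<le> card B} \<union> {(Some B, None) | B. B \<in> Q \<and> 2 \<le> card B}"
    by (simp add: basic_tree_def)
  have eG': "edges ?G' = {(None, Some B) | B. B \<in> Q \<and> B \<notin> X \<and> 2 \<le> card B} \<union> {(Some B, None) | B. B \<in> Q \<and> B \<notin> X \<and> 2 \<le> card B}"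
    using gd by (simp add: basic_tree_def)
  note cc = c[unfolded contracts_def]
  have c1: "f ` verts H = verts ?G" using conjunct1[OF cc] .
  note c2 = conjunct1[OF conjunct2[OF cc], rule_format]
  note c3 = conjunct1[OF conjunct2[OF conjunct2[OF cc]], rule_format]
  note c4 = conjunct2[OF conjunct2[OF conjunct2[OF cc]], rule_format]
  have eH: "edges H \<subseteq> verts H \<times> verts H" and symH: "sym (edges H)" and neH: "verts H \<noteq> {}"
    using st unfolding stable_tree_def by simp_all
  have part_a: "g ` verts H = verts ?G'"
  proof
    show "g ` verts H \<subseteq> verts ?G'"
    proof
      fix y assume "y \<in> g ` verts H"
      then obtain x where x: "x \<in> verts H" "y = g x" by auto
      then have "f x \<in> verts ?G" using c1 by auto
      then show "y \<in> verts ?G'" unfolding vG vG' using x gS gN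
        by (cases "g x") auto
    qed
    show "verts ?G' \<subseteq> g ` verts H"
    proof
      fix y assume y: "y \<in> verts ?G'"
      show "y \<in> g ` verts H"
      proof (cases y)
        case None
        have "None \<in> f ` verts H" using c1 vG by auto
        then obtain x where "x \<in> verts H" "f x = None" by auto
        then show ?thesis using None gN by force
      next
        case (Some B)
        then have B: "B \<in> Q" "B \<notin> X" "2 \<le> card B" using y vG' by auto
        then have "Some B \<in> f ` verts H" using c1 vG by auto
        then obtain x where "x \<in> verts H" "f x = Some B" by auto
        then show ?thesis using Some gS B by force
      qed
    qed
  qed
  have "None \<in> f ` verts H" using c1 vG by simp
  then obtain r where r: "r \<in> verts H" "f r = None" by auto
  define F where "F = {z\<in>verts H. g z = None}"
  define R where "R = edges H \<inter> F \<times> F"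
  have symR: "sym R" using symH unfolding R_def sym_def by auto
  have toR: "\<And>x. x \<in> verts H \<Longrightarrow> g x = None \<Longrightarrow> (x, r) \<in> R\<^sup>*"
  proof -
    fix x assume x: "x \<in> verts H" "g x = None"
    have monoN: "(edges H \<inter> {z\<in>verts H. f z = None} \<times> {z\<in>verts H. f z = None})\<^sup>* \<subseteq> R\<^sup>*"
      by (rule rtrancl_mono) (auto simp: R_def F_def gN)
    have NG: "None \<in> verts ?G" using vG by auto
    show "(x, r) \<in> R\<^sup>*"
    proof (cases "f x = None")
      case True
      then show ?thesis using c2[OF NG x(1) r(1) True r(2)] monoN by blast
    next
      case False
      then obtain B where B: "B \<in> X" "f x = Some B" using x gN by auto
      have BG: "Some B \<in> verts ?G" using B XQ Xc vG by auto
      have "(Some B, None) \<in> edges ?G" using B XQ Xc eG by auto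
      then obtain x1 x1' where e: "(x1, x1') \<in> edges H" "f x1 = Some B" "f x1' = None"
        using c3[OF BG NG] by auto
      have v: "x1 \<in> verts H" "x1' \<in> verts H" using e eH by auto
      have monoB: "(edges H \<inter> {z\<in>verts H. f z = Some B} \<times> {z\<in>verts H. f z = Some B})\<^sup>* \<subseteq> R\<^sup>*"
        by (rule rtrancl_mono) (use B in \<open>auto simp: R_def F_def gN\<close>)
      have s1: "(x, x1) \<in> R\<^sup>*" using c2[OF BG x(1) v(1) B(2) e(2)] monoB by blast
      have s2: "(x1, x1') \<in> R" using e v B unfolding R_def F_def by (auto simp: gN)
      have s3: "(x1', r) \<in> R\<^sup>*" using c2[OF NG v(2) r(1) e(3) r(2)] monoN by blast
      show ?thesis using rtrancl_trans[OF rtrancl_into_rtrancl[OF s1 s2] s3] .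
    qed
  qed
  have part_b: "\<forall>y\<in>verts ?G'. \<forall>x\<in>verts H. \<forall>x'\<in>verts H. g x = y \<longrightarrow> g x' = y \<longrightarrow>
        (x, x') \<in> (edges H \<inter> {z\<in>verts H. g z = y} \<times> {z\<in>verts H. g z = y})\<^sup>*"
  proof (intro ballI impI)
    fix y x x' assume y: "y \<in> verts ?G'" and x: "x \<in> verts H" "x' \<in> verts H" and gx: "g x = y" "g x' = y"
    show "(x, x') \<in> (edges H \<inter> {z\<in>verts H. g z = y} \<times> {z\<in>verts H. g z = y})\<^sup>*"
    proof (cases y)
      case None
      have a: "(x, r) \<in> R\<^sup>*" using toR x(1) gx None by auto
      have b: "(x', r) \<in> R\<^sup>*" using toR x(2) gx None by auto
      have b': "(r, x') \<in> R\<^sup>*" using b sym_rtrancl[OF symR] by (auto dest: symD)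
      show ?thesis using rtrancl_trans[OF a b'] None unfolding R_def F_def by simp
    next
      case (Some B)
      then have B: "B \<in> Q" "B \<notin> X" "2 \<le> card B" using y vG' by auto
      have BG: "Some B \<in> verts ?G" using B vG by auto
      have fe: "{z\<in>verts H. g z = y} = {z\<in>verts H. f z = Some B}" using Some gS B by auto
      show ?thesis unfolding fe using c2[OF BG x] gx Some gS by auto
    qed
  qed
  have part_c: "\<forall>y\<in>verts ?G'. \<forall>y'\<in>verts ?G'. y \<noteq> y' \<longrightarrow>
        ((y, y') \<in> edges ?G' \<longleftrightarrow> (\<exists>x x'. (x, x') \<in> edges H \<and> g x = y \<and> g x' = y'))"
  proof (intro ballI impI)
    fix y y' assume y: "y \<in> verts ?G'" "y' \<in> verts ?G'" and ne: "y \<noteq> y'"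
    have NG: "None \<in> verts ?G" using vG by auto
    show "(y, y') \<in> edges ?G' \<longleftrightarrow> (\<exists>x x'. (x, x') \<in> edges H \<and> g x = y \<and> g x' = y')"
    proof (cases y)
      case None
      then obtain B where B': "y' = Some B" using ne by (cases y') auto
      then have B: "B \<in> Q" "B \<notin> X" "2 \<le> card B" using y vG' by auto
      have BG: "Some B \<in> verts ?G" using B vG by auto
      have "(None, Some B) \<in> edges ?G" using B eG by auto
      then obtain x x' where "(x, x') \<in> edges H" "f x = None" "f x' = Some B"
        using c3[OF NG BG] by auto
      then have "\<exists>x x'. (x, x') \<in> edges H \<and> g x = y \<and> g x' = y'"
        using None B' B gN gS by blast
      moreover have "(y, y') \<in> edges ?G'" using None B' B eG' by auto
      ultimately show ?thesis by simp
    next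
      case (Some B)
      then have B: "B \<in> Q" "B \<notin> X" "2 \<le> card B" using y vG' by auto
      have BG: "Some B \<in> verts ?G" using B vG by auto
      show ?thesis
      proof (cases y')
        case None
        have "(Some B, None) \<in> edges ?G" using B eG by auto
        then obtain x x' where "(x, x') \<in> edges H" "f x = Some B" "f x' = None"
          using c3[OF BG NG] by auto
        then have "\<exists>x x'. (x, x') \<in> edges H \<and> g x = y \<and> g x' = y'"
          using None Some B gN gS by blast
        moreover have "(y, y') \<in> edges ?G'" using None Some B eG' by auto
        ultimately show ?thesis by simp
      next
        case (Some C)
        then have C: "C \<in> Q" "C \<notin> X" "2 \<le> card C" using y vG' by auto
        have CG: "Some C \<in> verts ?G" using C vG by auto
        have nBC: "Some B \<noteq> Some C" using ne Some \<open>y = Some B\<close> by simp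
        have "(Some B, Some C) \<notin> edges ?G" using eG by auto
        then have "\<not>(\<exists>x x'. (x, x') \<in> edges H \<and> f x = Some B \<and> f x' = Some C)"
          using c3[OF BG CG nBC] by simp
        then have "\<not>(\<exists>x x'. (x, x') \<in> edges H \<and> g x = y \<and> g x' = y')"
          using Some \<open>y = Some B\<close> gS by auto
        moreover have "(y, y') \<notin> edges ?G'" using Some \<open>y = Some B\<close> eG' by auto
        ultimately show ?thesis by simp
      qed
    qed
  qed
  have part_d: "\<forall>i\<in>{1..n}. att ?G' i = g (att H i)"
  proof
    fix i :: nat assume i: "i \<in> {1..n}"
    have "i \<in> \<Union>Q" using pQ i unfolding partition_on_def by simp
    then obtain B where B: "B \<in> Q" "i \<in> B" by blast
    have bQ: "block_of Q i = B" using block_of_eq[OF pQ B] .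
    have pQ': "partition_on {1..n} ?Q'" using splitp_part[OF pQ XQ Xc] .
    have aG: "att ?G i = (if 2 \<le> card B then Some B else None)" using bQ by (simp add: basic_tree_def)
    have fa: "f (att H i) = (if 2 \<le> card B then Some B else None)" using c4[OF i] aG by simp
    show "att ?G' i = g (att H i)"
    proof (cases "B \<in> X")
      case True
      have "{i} \<in> ?Q'" using True B unfolding splitp_def by auto
      then have "block_of ?Q' i = {i}" using block_of_eq[OF pQ'] by auto
      then have "att ?G' i = None" by (simp add: basic_tree_def)
      moreover have "g (att H i) = None" using fa True Xc gN by auto
      ultimately show ?thesis by simp
    next
      case False
      have "B \<in> ?Q'" using False B unfolding splitp_def by auto
      then have "block_of ?Q' i = B" using block_of_eq[OF pQ'] B by auto
      then have "att ?G' i = (if 2 \<le> card B then Some B else None)" by (simp add: basic_tree_def)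
      moreover have "g (att H i) = (if 2 \<le> card B then Some B else None)"
        using fa False gN gS by (cases "2 \<le> card B") auto
      ultimately show ?thesis by simp
    qed
  qed
  show ?thesis unfolding contracts_def using part_a part_b part_c part_d by blast
qed

theorem lemma6p3:
  fixes n :: nat and P Q :: "nat set set"
  assumes "partition_on {1..n} P" and "3 \<le> card P" and "card P \<le> n - 1"
    and "partition_on {1..n} Q" and "part_le Q P" and "card Q \<ge> 3"
  shows "\<exists>Q'. partition_on {1..n} Q' \<and> part_preceq Q' P \<and> part_le Q Q' \<and>
           (\<forall>H :: 'v ltree. stable_tree n H \<longrightarrow> Z n Q H \<subseteq> Z n Q' H)"
proof -
  define X where "X = {B\<in>Q. 2 \<le> card B \<and> B \<subseteq> \<Union>{C\<in>P. card C = 1}}"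
  have XQ: "X \<subseteq> Q" and Xc: "\<forall>B\<in>X. 2 \<le> card B" unfolding X_def by auto
  have pP: "\<Union>P = {1..n}" "disjoint P" "{} \<notin> P" using assms(1) unfolding partition_on_def by auto
  show ?thesis
  proof (intro exI conjI allI impI)
    show "partition_on {1..n} (splitp Q X)" using splitp_part[OF assms(4) XQ Xc] .
    have h1: "part_le (splitp Q X) P" unfolding part_le_def
    proof
      fix C assume C: "C \<in> P"
      obtain D where D: "D \<in> Q" "C \<subseteq> D" using assms(5) C unfolding part_le_def by blast
      show "\<exists>D'\<in>splitp Q X. C \<subseteq> D'"
      proof (cases "D \<in> X")
        case False then show ?thesis using D unfolding splitp_def by blast
      next
        case True
        have "C \<noteq> {}" using C pP(3) by metis
        then obtain j where j: "j \<in> C" by blast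
        then have "j \<in> \<Union>{C\<in>P. card C = 1}" using True D unfolding X_def by blast
        then obtain C' where C': "C' \<in> P" "card C' = 1" "j \<in> C'" by blast
        then have C'j: "C' = {j}" by (metis card_1_singletonE singletonD)
        have "C = C'" using pP(2) C C' j unfolding disjoint_def by blast
        moreover have "{j} \<in> splitp Q X" using True D j unfolding splitp_def by blast
        ultimately show ?thesis using C'j by blast
      qed
    qed
    have h2: "\<forall>B\<in>splitp Q X. 2 \<le> card B \<longrightarrow> \<not> B \<subseteq> \<Union>{C\<in>P. card C = 1}"
    proof (intro ballI impI)
      fix B assume B: "B \<in> splitp Q X" "2 \<le> card B"
      then have "B \<in> Q - X" unfolding splitp_def by auto
      then show "\<not> B \<subseteq> \<Union>{C\<in>P. card C = 1}" using B(2) unfolding X_def by blast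
    qed
    show "part_preceq (splitp Q X) P" unfolding part_preceq_def using h1 h2 by blast
    show "part_le Q (splitp Q X)" unfolding part_le_def splitp_def using XQ by blast
    fix H :: "'v ltree" assume st: "stable_tree n H"
    show "Z n Q H \<subseteq> Z n (splitp Q X) H"
    proof
      fix w assume "w \<in> Z n Q H"
      then obtain f where w: "w \<in> verts H" "contracts n H (basic_tree Q) f" "f w = basic_vertex"
        unfolding Z_def by blast
      define g where "g = (\<lambda>x. case f x of None \<Rightarrow> None | Some B \<Rightarrow> if B \<in> X then None else Some B)"
      have "contracts n H (basic_tree (splitp Q X)) g"
        using contr_split[OF assms(4) XQ Xc st w(2) g_def] .
      moreover have "g w = basic_vertex" using w(3) unfolding g_def basic_vertex_def by simp
      ultimately show "w \<in> Z n (splitp Q X) H" using w(1) unfolding Z_def by blast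
    qed
  qed
qed

end
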